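(* Let $m$ be a positive integer and let $\delta$ be a positive divisor of $\lambda(m)$. (1) $\displaystyle\sum_{\substack{a\in U_m\\ \mathrm{ind}_m(a)=1}}a\equiv 1\pmod m$. (2) If $\delta=2$ (so $2\mid\lambda(m)$), then $\displaystyle\sum_{\substack{a\in U_m\\ \mathrm{ind}_m(a)=2}}a\equiv -1\pmod m$. (3) If $4\mid\delta$, then $\displaystyle\sum_{\substack{a\in U_m\\ \mathrm{ind}_m(a)=\delta}}a\equiv 0\pmod m$.
   Context: $U_m$ denotes the set of invertible residue classes in $\mathbb{Z}/m\mathbb{Z}$ (sums run over one representative of each such class). For $a$ coprime to $m$, $\mathrm{ind}_m(a)$ is the multiplicative order of $a$ modulo $m$, i.e. the smallest positive $k$ with $a^k\equiv 1\pmod m$. $\lambda(m)$ is the Carmichael function: the smallest $k>0$ such that $a^k\equiv 1\pmod m$ for all $a\in U_m$. *)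

theory Defs
  imports "HOL-Number_Theory.Number_Theory"
begin

end

theory Submission
  imports Defs
begin

lemma pair_sum_dvd:
  fixes S :: "nat set" and m :: nat
  assumes "finite S" and "\<And>a. a \<in> S \<Longrightarrow> 0 < a \<and> a < m \<and> m - a \<in> S \<and> 2 * a \<noteq> m"
  shows "int m dvd (\<Sum>a\<in>S. int a)"
proof -
  define S1 where "S1 = {a\<in>S. 2 * a < m}"
  define S2 where "S2 = {a\<in>S. 2 * a > m}"
  have un: "S = S1 \<union> S2" using assms(2) unfolding S1_def S2_def by force
  have dj: "S1 \<inter> S2 = {}" unfolding S1_def S2_def by auto
  have fin: "finite S1" "finite S2" using assms(1) unfolding S1_def S2_def by auto
  have bij: "bij_betw (\<lambda>a. m - a) S1 S2"
  proof (rule bij_betw_byWitness[where f' = "\<lambda>a. m - a"])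
    show "\<forall>a\<in>S1. m - (m - a) = a" using assms(2) unfolding S1_def by force
    show "\<forall>a\<in>S2. m - (m - a) = a" using assms(2) unfolding S2_def by force
    show "(\<lambda>a. m - a) ` S1 \<subseteq> S2" using assms(2) unfolding S1_def S2_def by force
    show "(\<lambda>a. m - a) ` S2 \<subseteq> S1" using assms(2) unfolding S1_def S2_def by force
  qed
  have "(\<Sum>a\<in>S2. int a) = (\<Sum>a\<in>S1. int (m - a))"
    using sum.reindex_bij_betw[OF bij, of int] by simp
  also have "\<dots> = (\<Sum>a\<in>S1. int m - int a)"
    by (rule sum.cong) (use assms(2) in \<open>auto simp: S1_def\<close>)
  finally have "(\<Sum>a\<in>S. int a) = (\<Sum>a\<in>S1. int a) + (\<Sum>a\<in>S1. int m - int a)"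
    using sum.union_disjoint[OF fin dj, of int] un by simp
  also have "\<dots> = (\<Sum>a\<in>S1. int m)" by (simp add: sum.distrib[symmetric])
  also have "\<dots> = int (card S1) * int m" by simp
  finally show ?thesis by simp
qed

lemma cong_pow1_int:
  fixes x m k :: nat
  shows "[x ^ k = 1] (mod m) \<longleftrightarrow> [int x ^ k = 1] (mod int m)"
  using cong_int_iff[of "x ^ k" 1 m] by simp

lemma neg_pow_cong:
  fixes m a k :: nat
  assumes "a \<le> m" "even k"
  shows "[(m - a) ^ k = 1] (mod m) \<longleftrightarrow> [a ^ k = 1] (mod m)"
proof -
  have "[int (m - a) = - int a] (mod int m)"
    using assms(1) by (simp add: cong_iff_dvd_diff)
  hence "[int (m - a) ^ k = (- int a) ^ k] (mod int m)" by (rule cong_pow)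
  hence c: "[int (m - a) ^ k = int a ^ k] (mod int m)" using assms(2) by simp
  have "[int (m - a) ^ k = 1] (mod int m) \<longleftrightarrow> [int a ^ k = 1] (mod int m)"
  proof
    assume "[int (m - a) ^ k = 1] (mod int m)"
    thus "[int a ^ k = 1] (mod int m)" using cong_trans[OF cong_sym[OF c]] by blast
  next
    assume "[int a ^ k = 1] (mod int m)"
    thus "[int (m - a) ^ k = 1] (mod int m)" using cong_trans[OF c] by blast
  qed
  thus ?thesis using cong_pow1_int[of "m - a" k m] cong_pow1_int[of a k m] by simp
qed

lemma tot_neg:
  fixes m a :: nat
  assumes "m > 2" "a \<in> totatives m"
  shows "m - a \<in> totatives m \<and> 0 < a \<and> a < m \<and> 2 * a \<noteq> m"
proof -
  have a: "0 < a" "a \<le> m" "coprime a m" using assms(2) by (auto simp: in_totatives_iff)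
  have "a \<noteq> m" using a assms(1) by auto
  hence am: "a < m" using a by auto
  have cop: "coprime (m - a) m"
  proof -
    have "gcd (m - a) m = gcd a m" using am by (intro gcd_diff2_nat) simp
    thus ?thesis using a(3) unfolding coprime_iff_gcd_eq_1 by simp
  qed
  have "2 * a \<noteq> m"
  proof
    assume h: "2 * a = m"
    hence "a dvd m" by auto
    with a(3) have "a = 1" using coprime_absorb_left[of a m] by simp
    with h assms(1) show False by simp
  qed
  thus ?thesis using am a cop by (auto simp: in_totatives_iff)
qed

lemma Carmichael_2: "Carmichael 2 = 1"
proof -
  have "totatives 2 = {1}" by (auto simp: in_totatives_iff le_Suc_eq numeral_2_eq_2)
  thus ?thesis by (simp add: Carmichael_def)
qed

theorem theorem1p6:
  fixes m \<delta> :: nat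
  assumes "m > 0" and "\<delta> > 0" and "\<delta> dvd Carmichael m"
  shows "[(\<Sum>a\<in>{a\<in>totatives m. ord m a = 1}. int a) = 1] (mod int m)
    \<and> (\<delta> = 2 \<longrightarrow> [(\<Sum>a\<in>{a\<in>totatives m. ord m a = 2}. int a) = -1] (mod int m))
    \<and> (4 dvd \<delta> \<longrightarrow> [(\<Sum>a\<in>{a\<in>totatives m. ord m a = \<delta>}. int a) = 0] (mod int m))"
proof (intro conjI impI)
  have ord1: "ord m a = 1 \<longleftrightarrow> a = 1" if "a \<in> totatives m" for a
  proof -
    have a: "0 < a" "a \<le> m" using that by (auto simp: in_totatives_iff)
    have "ord m a = 1 \<longleftrightarrow> [a = 1] (mod m)" using ord_divides[of a 1 m] by auto
    also have "\<dots> \<longleftrightarrow> a = 1"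
    proof
      assume c: "[a = 1] (mod m)"
      show "a = 1"
      proof (cases "a = m")
        case True thus ?thesis using c a by (cases "m = 1") (auto simp: cong_def)
      next
        case False thus ?thesis using c a by (auto simp: cong_def)
      qed
    qed auto
    finally show ?thesis .
  qed
  have one: "1 \<in> totatives m" using assms(1) by (auto simp: in_totatives_iff)
  have S1: "{a\<in>totatives m. ord m a = 1} = {1}" using ord1 one by auto
  show "[(\<Sum>a\<in>{a\<in>totatives m. ord m a = 1}. int a) = 1] (mod int m)"
    unfolding S1 by simp
  have m2: "m > 2" if "\<delta> \<noteq> 1"
  proof (rule ccontr)
    assume "\<not> m > 2"
    hence "m = 1 \<or> m = 2" using assms(1) by auto
    hence "Carmichael m = 1" using Carmichael_2 by auto
    with assms(3) that show False by simp
  qed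
  {
    assume d2: "\<delta> = 2"
    hence mm: "m > 2" using m2 by simp
    define H where "H = {a\<in>totatives m. ord m a dvd 2}"
    have "int m dvd (\<Sum>a\<in>H. int a)"
    proof (rule pair_sum_dvd)
      show "finite H" unfolding H_def by simp
      fix a assume "a \<in> H"
      hence a: "a \<in> totatives m" "ord m a dvd 2" unfolding H_def by auto
      have t: "m - a \<in> totatives m \<and> 0 < a \<and> a < m \<and> 2 * a \<noteq> m" using tot_neg[OF mm a(1)] .
      have "ord m (m - a) dvd 2" using a(2) neg_pow_cong[of a m 2] t
        by (simp add: ord_divides[symmetric])
      thus "0 < a \<and> a < m \<and> m - a \<in> H \<and> 2 * a \<noteq> m" using t unfolding H_def by auto
    qed
    moreover have "H = {a\<in>totatives m. ord m a = 1} \<union> {a\<in>totatives m. ord m a = 2}"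
    proof -
      have "ord m a dvd 2 \<longleftrightarrow> ord m a = 1 \<or> ord m a = 2" if "a \<in> totatives m" for a
      proof -
        have "ord m a \<noteq> 0" using that by (auto simp: ord_eq_0 in_totatives_iff coprime_commute)
        moreover have "x dvd 2 \<longleftrightarrow> x = 1 \<or> x = 2" if "x \<noteq> 0" for x :: nat
          using that dvd_imp_le[of x 2] by (auto simp: le_Suc_eq)
        ultimately show ?thesis by blast
      qed
      thus ?thesis unfolding H_def by auto
    qed
    moreover have "(\<Sum>a\<in>{a\<in>totatives m. ord m a = 1} \<union> {a\<in>totatives m. ord m a = 2}. int a)
       = (\<Sum>a\<in>{a\<in>totatives m. ord m a = 1}. int a) + (\<Sum>a\<in>{a\<in>totatives m. ord m a = 2}. int a)"
      by (rule sum.union_disjoint) auto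
    ultimately have "int m dvd 1 + (\<Sum>a\<in>{a\<in>totatives m. ord m a = 2}. int a)"
      using S1 by simp
    thus "[(\<Sum>a\<in>{a\<in>totatives m. ord m a = 2}. int a) = -1] (mod int m)"
      by (simp add: cong_iff_dvd_diff add.commute)
  }
  {
    assume d4: "4 dvd \<delta>"
    hence mm: "m > 2" using m2 by auto
    have "int m dvd (\<Sum>a\<in>{a\<in>totatives m. ord m a = \<delta>}. int a)"
    proof (rule pair_sum_dvd)
      show "finite {a\<in>totatives m. ord m a = \<delta>}" by simp
      fix a assume "a \<in> {a\<in>totatives m. ord m a = \<delta>}"
      hence a: "a \<in> totatives m" "ord m a = \<delta>" by auto
      have t: "m - a \<in> totatives m \<and> 0 < a \<and> a < m \<and> 2 * a \<noteq> m" using tot_neg[OF mm a(1)] .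
      define e where "e = ord m (m - a)"
      have ev: "even \<delta>" using d4 by (metis dvd_trans even_numeral)
      have "e dvd \<delta>" unfolding e_def using neg_pow_cong[of a m \<delta>] t ev a(2) ord_divides'[of a \<delta> m] ord_divides'[of "m-a" \<delta> m]
        by simp
      have e0: "e \<noteq> 0" unfolding e_def using t
        by (auto simp: ord_eq_0 in_totatives_iff coprime_commute)
      have "e = \<delta>"
      proof (cases "even e")
        case True
        have "[(m - a) ^ e = 1] (mod m)" unfolding e_def using ord_divides'[of "m-a" "ord m (m-a)" m] by simp
        hence "[a ^ e = 1] (mod m)" using neg_pow_cong[of a m e] t True by simp
        hence "\<delta> dvd e" using a(2) ord_divides'[of a e m] by simp
        thus ?thesis using \<open>e dvd \<delta>\<close> by (simp add: dvd_antisym)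
      next
        case False
        have "[(m - a) ^ (2*e) = 1] (mod m)" unfolding e_def
          using ord_divides'[of "m-a" "2 * ord m (m-a)" m] by simp
        hence "[a ^ (2*e) = 1] (mod m)" using neg_pow_cong[of a m "2*e"] t by simp
        hence "\<delta> dvd 2 * e" using a(2) ord_divides'[of a "2*e" m] by simp
        hence "4 dvd 2 * e" using d4 by (meson dvd_trans)
        hence "even e" by presburger
        with False show ?thesis by simp
      qed
      thus "0 < a \<and> a < m \<and> m - a \<in> {a\<in>totatives m. ord m a = \<delta>} \<and> 2 * a \<noteq> m"
        using t unfolding e_def by auto
    qed
    thus "[(\<Sum>a\<in>{a\<in>totatives m. ord m a = \<delta>}. int a) = 0] (mod int m)"
      by (simp add: cong_0_iff)
  }
qed

end
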